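(* Let $v,X,Y\in\mathbb{R}^d$ with $\|X\|<\|v\|$ and $\|Y\|<\|v\|$. Then $$\alpha(v+X,v+Y)\geq -\frac{\|X\|\|Y\|}{\|v\|^2}+\sqrt{1-\frac{\|X\|^2}{\|v\|^2}}\sqrt{1-\frac{\|Y\|^2}{\|v\|^2}}.$$
   Context: For nonzero $a,b\in\mathbb{R}^d$, the cosine similarity is $\alpha(a,b)=\frac{\langle a,b\rangle}{\|a\|\|b\|}$. *)

theory Defs
  imports "HOL-Analysis.Analysis"
begin

definition cos_sim :: "real ^ 'n \<Rightarrow> real ^ 'n \<Rightarrow> real" where
  "cos_sim a b = (a \<bullet> b) / (norm a * norm b)"

end

theory Submission
  imports Defs
begin

lemma side:
  fixes v X :: "'a::real_inner"
  assumes "norm X < norm v"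
  defines "u \<equiv> v + X"
  shows "u \<noteq> 0" "u \<bullet> v > 0"
    "(u \<bullet> v)\<^sup>2 \<ge> ((norm v)\<^sup>2 - (norm X)\<^sup>2) * (norm u)\<^sup>2"
proof -
  have n: "norm v > 0" using assms(1) norm_ge_zero[of X] by linarith
  have cs: "\<bar>X \<bullet> v\<bar> \<le> norm X * norm v" by (rule Cauchy_Schwarz_ineq2)
  have "norm X * norm v < norm v * norm v" using assms(1) n by simp
  hence uv: "u \<bullet> v = (norm v)\<^sup>2 + X \<bullet> v"
    unfolding u_def by (simp add: inner_add_left power2_norm_eq_inner)
  show "u \<bullet> v > 0" unfolding uv using cs \<open>norm X * norm v < norm v * norm v\<close>
    by (simp add: power2_eq_square)
  thus "u \<noteq> 0" by auto
  have uu: "(norm u)\<^sup>2 = (norm v)\<^sup>2 + 2 * (X \<bullet> v) + (norm X)\<^sup>2"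
    unfolding u_def power2_norm_eq_inner by (simp add: inner_add_left inner_add_right inner_commute)
  have "(u \<bullet> v)\<^sup>2 - ((norm v)\<^sup>2 - (norm X)\<^sup>2) * (norm u)\<^sup>2 = (X \<bullet> v + (norm X)\<^sup>2)\<^sup>2"
    unfolding uv uu by (simp add: algebra_simps power2_eq_square)
  thus "(u \<bullet> v)\<^sup>2 \<ge> ((norm v)\<^sup>2 - (norm X)\<^sup>2) * (norm u)\<^sup>2"
    by (metis diff_ge_0_iff_ge zero_le_power2)
qed

lemma proj:
  fixes u w v :: "'a::real_inner"
  assumes "v \<noteq> 0"
  shows "u \<bullet> w \<ge> (u \<bullet> v) * (w \<bullet> v) / (norm v)\<^sup>2
     - sqrt ((norm u)\<^sup>2 - (u \<bullet> v)\<^sup>2 / (norm v)\<^sup>2) * sqrt ((norm w)\<^sup>2 - (w \<bullet> v)\<^sup>2 / (norm v)\<^sup>2)"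
proof -
  define N where "N = (norm v)\<^sup>2"
  have N: "N > 0" "v \<bullet> v = N" using assms by (auto simp: N_def power2_norm_eq_inner)
  define U where "U = u - ((u \<bullet> v) / N) *\<^sub>R v"
  define W where "W = w - ((w \<bullet> v) / N) *\<^sub>R v"
  have e1: "u \<bullet> w = (u \<bullet> v) * (w \<bullet> v) / N + U \<bullet> W"
    unfolding U_def W_def using N
    by (simp add: inner_diff_left inner_diff_right inner_commute field_simps power2_eq_square)
  have e2: "(norm U)\<^sup>2 = (norm u)\<^sup>2 - (u \<bullet> v)\<^sup>2 / N"
    unfolding U_def power2_norm_eq_inner using N
    by (simp add: inner_diff_left inner_diff_right inner_commute field_simps power2_eq_square)
  have e3: "(norm W)\<^sup>2 = (norm w)\<^sup>2 - (w \<bullet> v)\<^sup>2 / N"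
    unfolding W_def power2_norm_eq_inner using N
    by (simp add: inner_diff_left inner_diff_right inner_commute field_simps power2_eq_square)
  have "U \<bullet> W \<ge> - (norm U * norm W)" using Cauchy_Schwarz_ineq2[of U W] by linarith
  moreover have "norm U = sqrt ((norm u)\<^sup>2 - (u \<bullet> v)\<^sup>2 / N)" by (metis e2 norm_ge_zero real_sqrt_abs abs_of_nonneg)
  moreover have "norm W = sqrt ((norm w)\<^sup>2 - (w \<bullet> v)\<^sup>2 / N)" by (metis e3 norm_ge_zero real_sqrt_abs abs_of_nonneg)
  ultimately show ?thesis using e1 N_def by simp
qed

theorem lemma1:
  fixes v X Y :: "real ^ 'n"
  assumes "norm X < norm v" and "norm Y < norm v"
  shows "cos_sim (v + X) (v + Y) \<ge>
           - (norm X * norm Y) / (norm v)\<^sup>2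
           + sqrt (1 - (norm X)\<^sup>2 / (norm v)\<^sup>2) * sqrt (1 - (norm Y)\<^sup>2 / (norm v)\<^sup>2)"
proof -
  define u where "u = v + X"
  define w where "w = v + Y"
  define n where "n = norm v"
  have n: "n > 0" unfolding n_def using assms(1) norm_ge_zero[of X] by linarith
  have v0: "v \<noteq> 0" using n n_def by auto
  note su = side[OF assms(1), folded u_def]
  note sw = side[OF assms(2), folded w_def]
  have nu: "norm u > 0" "norm w > 0" using su sw by auto
  define p where "p = u \<bullet> v"
  define q where "q = w \<bullet> v"
  define c1 where "c1 = p / (n * norm u)"
  define c2 where "c2 = q / (n * norm w)"
  define s1 where "s1 = sqrt ((norm u)\<^sup>2 - p\<^sup>2 / n\<^sup>2) / norm u"
  define s2 where "s2 = sqrt ((norm w)\<^sup>2 - q\<^sup>2 / n\<^sup>2) / norm w"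
  have c1: "c1 \<ge> 0" "c2 \<ge> 0" using su sw n nu by (auto simp: c1_def c2_def p_def q_def)
  have s1: "s1 = sqrt (1 - c1\<^sup>2)"
  proof -
    have "1 - c1\<^sup>2 = ((norm u)\<^sup>2 - p\<^sup>2 / n\<^sup>2) / (norm u)\<^sup>2"
      unfolding c1_def using nu n by (simp add: field_simps power2_eq_square)
    thus ?thesis unfolding s1_def using nu by (simp add: real_sqrt_divide)
  qed
  have s2: "s2 = sqrt (1 - c2\<^sup>2)"
  proof -
    have "1 - c2\<^sup>2 = ((norm w)\<^sup>2 - q\<^sup>2 / n\<^sup>2) / (norm w)\<^sup>2"
      unfolding c2_def using nu n by (simp add: field_simps power2_eq_square)
    thus ?thesis unfolding s2_def using nu by (simp add: real_sqrt_divide)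
  qed
  have cc1: "c1\<^sup>2 \<ge> 1 - (norm X)\<^sup>2 / n\<^sup>2"
  proof -
    have e: "1 - (norm X)\<^sup>2 / n\<^sup>2 = ((n\<^sup>2 - (norm X)\<^sup>2) * (norm u)\<^sup>2) / (n\<^sup>2 * (norm u)\<^sup>2)"
      using nu n by (simp add: field_simps)
    have e2: "c1\<^sup>2 = p\<^sup>2 / (n\<^sup>2 * (norm u)\<^sup>2)" unfolding c1_def by (simp add: power_divide power_mult_distrib)
    show ?thesis unfolding e e2 using su(3) unfolding p_def n_def[symmetric]
      by (intro divide_right_mono) auto
  qed
  have cc2: "c2\<^sup>2 \<ge> 1 - (norm Y)\<^sup>2 / n\<^sup>2"
  proof -
    have e: "1 - (norm Y)\<^sup>2 / n\<^sup>2 = ((n\<^sup>2 - (norm Y)\<^sup>2) * (norm w)\<^sup>2) / (n\<^sup>2 * (norm w)\<^sup>2)"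
      using nu n by (simp add: field_simps)
    have e2: "c2\<^sup>2 = q\<^sup>2 / (n\<^sup>2 * (norm w)\<^sup>2)" unfolding c2_def by (simp add: power_divide power_mult_distrib)
    show ?thesis unfolding e e2 using sw(3) unfolding q_def n_def[symmetric]
      by (intro divide_right_mono) auto
  qed
  have A1: "c1 \<ge> sqrt (1 - (norm X)\<^sup>2 / n\<^sup>2)" using cc1 c1 by (metis real_sqrt_abs abs_of_nonneg real_sqrt_le_mono)
  have A2: "c2 \<ge> sqrt (1 - (norm Y)\<^sup>2 / n\<^sup>2)" using cc2 c1 by (metis real_sqrt_abs abs_of_nonneg real_sqrt_le_mono)
  have "s1 \<le> sqrt ((norm X)\<^sup>2 / n\<^sup>2)" unfolding s1 using cc1 by (intro real_sqrt_le_mono) linarith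
  hence B1: "s1 \<le> norm X / n" using n by (simp add: real_sqrt_divide)
  have "s2 \<le> sqrt ((norm Y)\<^sup>2 / n\<^sup>2)" unfolding s2 using cc2 by (intro real_sqrt_le_mono) linarith
  hence B2: "s2 \<le> norm Y / n" using n by (simp add: real_sqrt_divide)
  have s0: "s1 \<ge> 0" "s2 \<ge> 0"
  proof -
    have "\<bar>p\<bar> \<le> norm u * n" "\<bar>q\<bar> \<le> norm w * n"
      unfolding p_def q_def n_def by (auto intro: Cauchy_Schwarz_ineq2)
    hence "p\<^sup>2 \<le> (norm u * n)\<^sup>2" "q\<^sup>2 \<le> (norm w * n)\<^sup>2"
      by (auto simp: abs_le_square_iff[symmetric])
    hence "p\<^sup>2 / n\<^sup>2 \<le> (norm u)\<^sup>2" "q\<^sup>2 / n\<^sup>2 \<le> (norm w)\<^sup>2"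
      using n by (auto simp: divide_le_eq power_mult_distrib)
    thus "s1 \<ge> 0" "s2 \<ge> 0" unfolding s1_def s2_def by auto
  qed
  have "cos_sim u w = (u \<bullet> w) / (norm u * norm w)" by (simp add: cos_sim_def)
  also have "\<dots> \<ge> c1 * c2 - s1 * s2"
  proof -
    have "u \<bullet> w \<ge> p * q / n\<^sup>2 - (s1 * norm u) * (s2 * norm w)"
      using proj[OF v0, of u w] nu unfolding p_def q_def s1_def s2_def n_def by simp
    hence "(u \<bullet> w) / (norm u * norm w) \<ge> (p * q / n\<^sup>2 - (s1 * norm u) * (s2 * norm w)) / (norm u * norm w)"
      using nu by (intro divide_right_mono) auto
    moreover have "(p * q / n\<^sup>2 - (s1 * norm u) * (s2 * norm w)) / (norm u * norm w) = c1 * c2 - s1 * s2"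
      unfolding c1_def c2_def using nu n by (simp add: field_simps power2_eq_square)
    ultimately show ?thesis by linarith
  qed
  finally have main: "cos_sim u w \<ge> c1 * c2 - s1 * s2" .
  have "c1 * c2 \<ge> sqrt (1 - (norm X)\<^sup>2 / n\<^sup>2) * sqrt (1 - (norm Y)\<^sup>2 / n\<^sup>2)"
  proof (rule mult_mono[OF A1 A2])
    have "(norm Y)\<^sup>2 \<le> n\<^sup>2" unfolding n_def using assms(2) by (intro power_mono) auto
    thus "0 \<le> sqrt (1 - (norm Y)\<^sup>2 / n\<^sup>2)" using n by simp
  qed (use c1 in auto)
  moreover have "s1 * s2 \<le> (norm X / n) * (norm Y / n)" using B1 B2 s0 by (intro mult_mono) auto
  moreover have "(norm X / n) * (norm Y / n) = norm X * norm Y / n\<^sup>2" by (simp add: power2_eq_square)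
  ultimately show ?thesis using main unfolding u_def w_def n_def by linarith
qed

end
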